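(* Let $E$ be a real or complex Banach space, $T$ a strongly continuous semigroup on $E$, $\mathcal U$ a countably incomplete ultrafilter on a set $I$, and ${}^*$ the corresponding bounded ultrapower. Let $\Phi:\ell^\infty_I(E)/c_{\mathcal U}\to\widehat E$, $\Phi(\langle f_i\rangle+c_{\mathcal U})=\widehat f$ ($f$ the $\mathcal U$-class of $\langle f_i\rangle$). Then $\widehat E_{\max}=\Phi\big(\{x\in\ell^\infty_I(E)/c_{\mathcal U}:\lim_{t\to0}\|\tilde T(t)x-x\|=0\}\big)$, i.e. $\widehat E_{\max}$ corresponds to the maximal continuous subspace of $\ell^\infty_I(E)/c_{\mathcal U}$ with respect to $\tilde T$.
   Context: A semigroup is a map $T:[0,\infty)\to\mathcal L(E)$ with $T(0)=\mathrm{Id}$, $T(s+t)=T(s)T(t)$; strongly continuous means $\lim_{t\to0}\|T(t)f-f\|=0$ for all $f$. $\ell^\infty_I(E)$: bounded families in $E$ with sup-norm; $c_{\mathcal U}$: families with: for every $\varepsilon>0$ some $J\in\mathcal U$ has $\|f_i\|<\varepsilon$ for $i\in J$; quotient norm on $\ell^\infty_I(E)/c_{\mathcal U}$; $\tilde T(t)\langle f_i\rangle=\langle T(t)f_i\rangle$, induced also on the quotient. In the bounded ultrapower, ${}^*E$ consists of $\mathcal U$-classes of $I$-sequences in $E$. A nonstandard element is finite if its norm is bounded by a standard natural number, infinitesimal if its norm is below every standard $1/n$. $\widehat E=\mathrm{fin}({}^*E)/E_0$ (finite elements modulo infinitesimal ones), class map $f\mapsto\widehat f$, norm $\mathrm{st}(\|f\|)$.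 $E_{\max}$ is the set of finite $f\in{}^*E$ such that for every standard $\varepsilon>0$ there is standard $\delta>0$ with $\|{}^*T(t)f-f\|<\varepsilon$ for all positive standard $t<\delta$; $\widehat E_{\max}=E_{\max}/E_0$. *)

theory Defs
  imports "HOL-Analysis.Analysis"
begin

definition sc_semigroup :: "(real \<Rightarrow> 'e::banach \<Rightarrow> 'e) \<Rightarrow> bool" where
  "sc_semigroup T \<longleftrightarrow>
     (\<forall>t\<ge>0. bounded_linear (T t)) \<and>
     T 0 = id \<and>
     (\<forall>s t. s \<ge> 0 \<longrightarrow> t \<ge> 0 \<longrightarrow> T (s + t) = T s \<circ> T t) \<and>
     (\<forall>f. ((\<lambda>t. T t f) \<longlongrightarrow> f) (at_right 0))"

definition ultrafilter_on :: "'i set \<Rightarrow> 'i set set \<Rightarrow> bool" where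
  "ultrafilter_on I U \<longleftrightarrow>
     U \<subseteq> Pow I \<and> I \<in> U \<and> {} \<notin> U \<and>
     (\<forall>A\<in>U. \<forall>B\<in>U. A \<inter> B \<in> U) \<and>
     (\<forall>A\<in>U. \<forall>B. A \<subseteq> B \<and> B \<subseteq> I \<longrightarrow> B \<in> U) \<and>
     (\<forall>A. A \<subseteq> I \<longrightarrow> A \<in> U \<or> I - A \<in> U)"

definition countably_incomplete :: "'i set set \<Rightarrow> bool" where
  "countably_incomplete U \<longleftrightarrow> (\<exists>J :: nat \<Rightarrow> 'i set. (\<forall>n. J n \<in> U) \<and> \<Inter>(range J) \<notin> U)"

text \<open>Families indexed by I (values outside I are irrelevant).\<close>
definition lbounded :: "'i set \<Rightarrow> ('i \<Rightarrow> 'e::real_normed_vector) \<Rightarrow> bool" where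
  "lbounded I f \<longleftrightarrow> (\<exists>B. \<forall>i\<in>I. norm (f i) \<le> B)"

definition cU :: "'i set \<Rightarrow> 'i set set \<Rightarrow> ('i \<Rightarrow> 'e::real_normed_vector) \<Rightarrow> bool" where
  "cU I U f \<longleftrightarrow> lbounded I f \<and> (\<forall>\<epsilon>>0. \<exists>J\<in>U. \<forall>i\<in>J. norm (f i) < \<epsilon>)"

definition supnorm :: "'i set \<Rightarrow> ('i \<Rightarrow> 'e::real_normed_vector) \<Rightarrow> real" where
  "supnorm I f = (SUP i\<in>I. norm (f i))"

definition qnorm :: "'i set \<Rightarrow> 'i set set \<Rightarrow> ('i \<Rightarrow> 'e::real_normed_vector) \<Rightarrow> real" where
  "qnorm I U g = (INF c\<in>{c. cU I U c}. supnorm I (\<lambda>i. g i - c i))"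

definition qclass :: "'i set \<Rightarrow> 'i set set \<Rightarrow> ('i \<Rightarrow> 'e::real_normed_vector) \<Rightarrow> ('i \<Rightarrow> 'e) set" where
  "qclass I U g = {h. lbounded I h \<and> cU I U (\<lambda>i. h i - g i)}"

text \<open>Nonstandard notions in the bounded ultrapower, via representing I-families.
  The nonstandard norm of f is the U-class of (norm (f i)).\<close>
definition ns_finite :: "'i set \<Rightarrow> 'i set set \<Rightarrow> ('i \<Rightarrow> 'e::real_normed_vector) \<Rightarrow> bool" where
  "ns_finite I U f \<longleftrightarrow> (\<exists>n::nat. {i\<in>I. norm (f i) \<le> real n} \<in> U)"

definition ns_infinitesimal :: "'i set \<Rightarrow> 'i set set \<Rightarrow> ('i \<Rightarrow> 'e::real_normed_vector) \<Rightarrow> bool" where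
  "ns_infinitesimal I U f \<longleftrightarrow> (\<forall>n::nat. n > 0 \<longrightarrow> {i\<in>I. norm (f i) < 1 / real n} \<in> U)"

text \<open>The class of f in E-hat = fin(*E)/E_0 (as a set of representing families).\<close>
definition hatclass :: "'i set \<Rightarrow> 'i set set \<Rightarrow> ('i \<Rightarrow> 'e::real_normed_vector) \<Rightarrow> ('i \<Rightarrow> 'e) set" where
  "hatclass I U f = {g. ns_finite I U g \<and> ns_infinitesimal I U (\<lambda>i. g i - f i)}"

text \<open>E_max: finite f with: for every standard eps>0 there is standard delta>0 such that
  the nonstandard norm of *T(t) f - f is < eps for all standard 0<t<delta.\<close>
definition Emax :: "'i set \<Rightarrow> 'i set set \<Rightarrow> (real \<Rightarrow> 'e::real_normed_vector \<Rightarrow> 'e) \<Rightarrow> ('i \<Rightarrow> 'e) set" where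
  "Emax I U T = {f. ns_finite I U f \<and>
     (\<forall>\<epsilon>>0. \<exists>\<delta>>0. \<forall>t. 0 < t \<and> t < \<delta> \<longrightarrow> {i\<in>I. norm (T t (f i) - f i) < \<epsilon>} \<in> U)}"

definition Emax_hat :: "'i set \<Rightarrow> 'i set set \<Rightarrow> (real \<Rightarrow> 'e::real_normed_vector \<Rightarrow> 'e) \<Rightarrow> ('i \<Rightarrow> 'e) set set" where
  "Emax_hat I U T = hatclass I U ` Emax I U T"

definition Phi :: "'i set \<Rightarrow> 'i set set \<Rightarrow> ('i \<Rightarrow> 'e::real_normed_vector) set \<Rightarrow> ('i \<Rightarrow> 'e) set" where
  "Phi I U X = hatclass I U (SOME g. g \<in> X)"

end

theory Submission
  imports Defs
begin

lemma uf_up: "ultrafilter_on I U \<Longrightarrow> A \<in> U \<Longrightarrow> A \<subseteq> B \<Longrightarrow> B \<subseteq> I \<Longrightarrow> B \<in> U"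
  unfolding ultrafilter_on_def by blast

lemma uf_int: "ultrafilter_on I U \<Longrightarrow> A \<in> U \<Longrightarrow> B \<in> U \<Longrightarrow> A \<inter> B \<in> U"
  unfolding ultrafilter_on_def by blast

lemma uf_sub: "ultrafilter_on I U \<Longrightarrow> A \<in> U \<Longrightarrow> A \<subseteq> I"
  unfolding ultrafilter_on_def by blast

lemma uf_I: "ultrafilter_on I U \<Longrightarrow> I \<in> U"
  unfolding ultrafilter_on_def by blast

lemma uf_ne: "ultrafilter_on I U \<Longrightarrow> A \<in> U \<Longrightarrow> A \<noteq> {}"
  unfolding ultrafilter_on_def by blast

lemma supnorm_ge:
  assumes "lbounded I y" "i \<in> I"
  shows "norm (y i) \<le> supnorm I y"
proof -
  obtain B where B: "\<forall>i\<in>I. norm (y i) \<le> B" using assms(1) unfolding lbounded_def by blast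
  have "bdd_above ((\<lambda>i. norm (y i)) ` I)" using B by (auto intro: bdd_aboveI2)
  then show ?thesis unfolding supnorm_def using assms(2) by (rule cSUP_upper2) auto
qed

lemma supnorm_nonneg:
  assumes "lbounded I y" "I \<noteq> {}"
  shows "0 \<le> supnorm I y"
  using supnorm_ge[OF assms(1)] assms(2) norm_ge_zero by (meson ex_in_conv order_trans)

lemma supnorm_le:
  assumes "I \<noteq> {}" "\<And>i. i \<in> I \<Longrightarrow> norm (y i) \<le> e"
  shows "supnorm I y \<le> e"
  unfolding supnorm_def using assms by (intro cSUP_least) auto

lemma lbounded_diff:
  assumes "lbounded I x" "lbounded I c"
  shows "lbounded I (\<lambda>i. x i - c i)"
proof -
  obtain B where B: "\<forall>i\<in>I. norm (x i) \<le> B" using assms(1) unfolding lbounded_def by blast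
  obtain C where C: "\<forall>i\<in>I. norm (c i) \<le> C" using assms(2) unfolding lbounded_def by blast
  have "\<forall>i\<in>I. norm (x i - c i) \<le> B + C"
    using B C by (meson add_mono norm_triangle_ineq4 order_trans)
  then show ?thesis unfolding lbounded_def by blast
qed

lemma qnorm_bdd:
  assumes "ultrafilter_on I U" "lbounded I x"
  shows "bdd_below ((\<lambda>c. supnorm I (\<lambda>i. x i - c i)) ` {c. cU I U c})"
proof -
  have "I \<noteq> {}" using uf_ne[OF assms(1) uf_I[OF assms(1)]] .
  then have "\<forall>c\<in>{c. cU I U c}. 0 \<le> supnorm I (\<lambda>i. x i - c i)"
    using supnorm_nonneg lbounded_diff assms(2) unfolding cU_def by blast
  then show ?thesis by (auto intro: bdd_belowI2)
qed

lemma cU_zero: "ultrafilter_on I U \<Longrightarrow> cU I U (\<lambda>i. 0)"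
  unfolding cU_def lbounded_def using uf_I by fastforce

lemma qnorm_nonneg:
  assumes "ultrafilter_on I U" "lbounded I x"
  shows "0 \<le> qnorm I U x"
proof -
  have "I \<noteq> {}" using uf_ne[OF assms(1) uf_I[OF assms(1)]] .
  have "\<And>c. cU I U c \<Longrightarrow> 0 \<le> supnorm I (\<lambda>i. x i - c i)"
    using supnorm_nonneg lbounded_diff assms(2) \<open>I \<noteq> {}\<close> unfolding cU_def by blast
  then show ?thesis unfolding qnorm_def using cU_zero[OF assms(1)]
    by (intro cINF_greatest) auto
qed

lemma lemA:
  assumes U: "ultrafilter_on I U" and x: "lbounded I x"
    and J: "{i\<in>I. norm (x i) < e} \<in> U"
  shows "qnorm I U x \<le> e"
proof -
  define J where "J = {i\<in>I. norm (x i) < e}"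
  define c where "c = (\<lambda>i. if i \<in> J then 0 else x i)"
  have JU: "J \<in> U" using J J_def by simp
  have Ine: "I \<noteq> {}" using uf_ne[OF U uf_I[OF U]] .
  obtain j where "j \<in> J" using uf_ne[OF U JU] by blast
  then have e0: "0 < e" unfolding J_def by (auto intro: le_less_trans[OF norm_ge_zero])
  obtain B where B: "\<forall>i\<in>I. norm (x i) \<le> B" using x unfolding lbounded_def by blast
  then have "\<forall>i\<in>I. norm (c i) \<le> B" unfolding c_def by (auto intro: order_trans[OF norm_ge_zero])
  then have cb: "lbounded I c" unfolding lbounded_def by blast
  have "cU I U c" unfolding cU_def using cb JU by (auto simp: c_def)
  then have "qnorm I U x \<le> supnorm I (\<lambda>i. x i - c i)"
    unfolding qnorm_def by (intro cINF_lower qnorm_bdd[OF U x]) auto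
  also have "\<dots> \<le> e"
    using e0 by (intro supnorm_le[OF Ine]) (auto simp: c_def J_def)
  finally show ?thesis .
qed

lemma lemB:
  assumes U: "ultrafilter_on I U" and x: "lbounded I x"
    and q: "qnorm I U x < e"
  shows "{i\<in>I. norm (x i) < e} \<in> U"
proof -
  obtain c where c: "cU I U c" and s: "supnorm I (\<lambda>i. x i - c i) < e"
  proof -
    have ne: "{c. cU I U c} \<noteq> {}" using cU_zero[OF U] by blast
    show ?thesis using q that unfolding qnorm_def cINF_less_iff[OF ne qnorm_bdd[OF U x]] by blast
  qed
  define s where "s = supnorm I (\<lambda>i. x i - c i)"
  have "e - s > 0" using s s_def by simp
  then obtain J where J: "J \<in> U" "\<forall>i\<in>J. norm (c i) < e - s"
    using c unfolding cU_def by blast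
  have JI: "J \<subseteq> I" using uf_sub[OF U J(1)] .
  have lb: "lbounded I (\<lambda>i. x i - c i)" using lbounded_diff x c unfolding cU_def by blast
  have "J \<subseteq> {i\<in>I. norm (x i) < e}"
  proof
    fix i assume i: "i \<in> J"
    have "norm (x i) \<le> norm (x i - c i) + norm (c i)" by (metis norm_triangle_sub add.commute)
    also have "norm (x i - c i) \<le> s" unfolding s_def using supnorm_ge[OF lb] i JI by auto
    finally show "i \<in> {i\<in>I. norm (x i) < e}" using J(2) i JI by auto
  qed
  then show ?thesis using uf_up[OF U J(1)] by blast
qed

definition Cond where
  "Cond I U T f \<longleftrightarrow> (\<forall>\<epsilon>>0. \<exists>\<delta>>0. \<forall>t. 0 < t \<and> t < \<delta> \<longrightarrow> {i\<in>I. norm (T t (f i) - f i) < \<epsilon>} \<in> U)"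

lemma Tbounded:
  assumes T: "sc_semigroup T" and g: "lbounded I g" and t: "t \<ge> 0"
  shows "lbounded I (\<lambda>i. T t (g i) - g i)"
proof -
  have bl: "bounded_linear (T t)" using T t unfolding sc_semigroup_def by blast
  obtain K where K: "\<And>v. norm (T t v) \<le> norm v * K" "K > 0"
    using bounded_linear.pos_bounded[OF bl] by blast
  obtain B where B: "\<forall>i\<in>I. norm (g i) \<le> B" using g unfolding lbounded_def by blast
  have "\<forall>i\<in>I. norm (T t (g i)) \<le> B * K"
    using B K by (meson mult_right_mono less_imp_le order_trans)
  then have "lbounded I (\<lambda>i. T t (g i))" unfolding lbounded_def by blast
  then show ?thesis using lbounded_diff g by blast
qed

lemma tendsto_Cond:
  assumes T: "sc_semigroup T" and U: "ultrafilter_on I U" and g: "lbounded I g"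
  shows "((\<lambda>t. qnorm I U (\<lambda>i. T t (g i) - g i)) \<longlongrightarrow> 0) (at_right 0) \<longleftrightarrow> Cond I U T g"
proof -
  have lb: "\<And>t. t > 0 \<Longrightarrow> lbounded I (\<lambda>i. T t (g i) - g i)" using Tbounded[OF T g] by simp
  have nn: "\<And>t. t > 0 \<Longrightarrow> qnorm I U (\<lambda>i. T t (g i) - g i) \<ge> 0" using qnorm_nonneg[OF U lb] by simp
  have "((\<lambda>t. qnorm I U (\<lambda>i. T t (g i) - g i)) \<longlongrightarrow> 0) (at_right 0) \<longleftrightarrow>
    (\<forall>e>0. \<exists>b>0. \<forall>t>0. t < b \<longrightarrow> qnorm I U (\<lambda>i. T t (g i) - g i) < e)"
    unfolding tendsto_iff eventually_at_right_field dist_real_def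
  proof (intro iffI allI impI)
    fix e :: real assume H: "\<forall>e>0. \<exists>b>0. \<forall>y>0. y < b \<longrightarrow> \<bar>qnorm I U (\<lambda>i. T y (g i) - g i) - 0\<bar> < e" and e: "e > 0"
    then obtain b where "b > 0" "\<forall>y>0. y < b \<longrightarrow> \<bar>qnorm I U (\<lambda>i. T y (g i) - g i) - 0\<bar> < e" by blast
    then show "\<exists>b>0. \<forall>t>0. t < b \<longrightarrow> qnorm I U (\<lambda>i. T t (g i) - g i) < e"
      by (auto intro: le_less_trans[OF abs_ge_self])
  next
    fix e :: real assume H: "\<forall>e>0. \<exists>b>0. \<forall>t>0. t < b \<longrightarrow> qnorm I U (\<lambda>i. T t (g i) - g i) < e" and e: "e > 0"
    then obtain b where "b > 0" "\<forall>t>0. t < b \<longrightarrow> qnorm I U (\<lambda>i. T t (g i) - g i) < e" by blast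
    then show "\<exists>b>0. \<forall>y>0. y < b \<longrightarrow> \<bar>qnorm I U (\<lambda>i. T y (g i) - g i) - 0\<bar> < e" using nn by auto
  qed
  also have "\<dots> \<longleftrightarrow> Cond I U T g"
    unfolding Cond_def
  proof safe
    fix e :: real assume H: "\<forall>e>0. \<exists>b>0. \<forall>t>0. t < b \<longrightarrow> qnorm I U (\<lambda>i. T t (g i) - g i) < e"
      and e: "e > 0"
    then obtain b where "b > 0" "\<forall>t>0. t < b \<longrightarrow> qnorm I U (\<lambda>i. T t (g i) - g i) < e" by blast
    then show "\<exists>\<delta>>0. \<forall>t. 0 < t \<and> t < \<delta> \<longrightarrow> {i \<in> I. norm (T t (g i) - g i) < e} \<in> U"
      using lemB[OF U lb] by blast
  next
    fix e :: real assume H: "\<forall>\<epsilon>>0. \<exists>\<delta>>0. \<forall>t. 0 < t \<and> t < \<delta> \<longrightarrow> {i \<in> I. norm (T t (g i) - g i) < \<epsilon>} \<in> U"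
      and e: "e > 0"
    then obtain b where "b > 0" "\<forall>t. 0 < t \<and> t < b \<longrightarrow> {i \<in> I. norm (T t (g i) - g i) < e/2} \<in> U"
      by (meson half_gt_zero)
    moreover have "e/2 < e" using e by simp
    ultimately show "\<exists>b>0. \<forall>t>0. t < b \<longrightarrow> qnorm I U (\<lambda>i. T t (g i) - g i) < e"
      using lemA[OF U lb] by (meson le_less_trans)
  qed
  finally show ?thesis .
qed

lemma infin_trans:
  assumes U: "ultrafilter_on I U"
    and a: "ns_infinitesimal I U (\<lambda>i. f i - g i)" and b: "ns_infinitesimal I U (\<lambda>i. k i - f i)"
  shows "ns_infinitesimal I U (\<lambda>i. k i - g i)"
  unfolding ns_infinitesimal_def
proof safe
  fix n :: nat assume n: "n > 0"
  have "2*n > 0" using n by simp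
  then have A: "{i\<in>I. norm (f i - g i) < 1 / real (2*n)} \<in> U" "{i\<in>I. norm (k i - f i) < 1 / real (2*n)} \<in> U"
    using a b unfolding ns_infinitesimal_def by blast+
  have "{i\<in>I. norm (f i - g i) < 1 / real (2*n)} \<inter> {i\<in>I. norm (k i - f i) < 1 / real (2*n)}
      \<subseteq> {i\<in>I. norm (k i - g i) < 1 / real n}"
  proof
    fix i assume "i \<in> {i\<in>I. norm (f i - g i) < 1 / real (2*n)} \<inter> {i\<in>I. norm (k i - f i) < 1 / real (2*n)}"
    then have h: "i \<in> I" "norm (f i - g i) < 1 / real (2*n)" "norm (k i - f i) < 1 / real (2*n)" by auto
    have "norm (k i - g i) \<le> norm (k i - f i) + norm (f i - g i)"
      by (metis diff_add_cancel add_diff_eq norm_triangle_ineq)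
    also have "\<dots> < 1 / real (2*n) + 1 / real (2*n)" using h by linarith
    also have "\<dots> = 1 / real n" using n by (simp add: field_simps)
    finally show "i \<in> {i\<in>I. norm (k i - g i) < 1 / real n}" using h by auto
  qed
  then show "{i\<in>I. norm (k i - g i) < 1 / real n} \<in> U"
    using uf_up[OF U uf_int[OF U A]] by blast
qed

lemma infin_sym:
  "ns_infinitesimal I U (\<lambda>i. f i - g i) \<Longrightarrow> ns_infinitesimal I U (\<lambda>i. g i - f i)"
  unfolding ns_infinitesimal_def by (simp add: norm_minus_commute)

lemma hat_eq:
  assumes U: "ultrafilter_on I U" and a: "ns_infinitesimal I U (\<lambda>i. f i - g i)"
  shows "hatclass I U f = hatclass I U g"
  unfolding hatclass_def using infin_trans[OF U a] infin_trans[OF U infin_sym[OF a]] by blast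

lemma cU_infin:
  assumes U: "ultrafilter_on I U" and c: "cU I U c"
  shows "ns_infinitesimal I U c"
  unfolding ns_infinitesimal_def
proof safe
  fix n :: nat assume "n > 0"
  then have "1 / real n > 0" by simp
  then obtain J where J: "J \<in> U" "\<forall>i\<in>J. norm (c i) < 1 / real n" using c unfolding cU_def by blast
  have "J \<subseteq> {i\<in>I. norm (c i) < 1 / real n}" using J uf_sub[OF U J(1)] by auto
  then show "{i\<in>I. norm (c i) < 1 / real n} \<in> U"
    using uf_up[OF U J(1)] by blast
qed

lemma Phi_eq:
  assumes U: "ultrafilter_on I U" and g: "lbounded I g"
  shows "Phi I U (qclass I U g) = hatclass I U g"
proof -
  have "g \<in> qclass I U g" unfolding qclass_def using g cU_zero[OF U] by simp
  then have "(SOME h. h \<in> qclass I U g) \<in> qclass I U g" by (rule someI[where P="\<lambda>h. h \<in> qclass I U g"])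
  then have "cU I U (\<lambda>i. (SOME h. h \<in> qclass I U g) i - g i)" unfolding qclass_def by blast
  then show ?thesis unfolding Phi_def by (intro hat_eq[OF U] cU_infin[OF U])
qed

theorem mainTheorem9:
  fixes T :: "real \<Rightarrow> 'e::banach \<Rightarrow> 'e"
    and I :: "'i set" and U :: "'i set set"
  assumes "sc_semigroup T"
    and "ultrafilter_on I U"
    and "countably_incomplete U"
  shows "Emax_hat I U T =
    Phi I U ` {qclass I U g | g. lbounded I g \<and>
       ((\<lambda>t. qnorm I U (\<lambda>i. T t (g i) - g i)) \<longlongrightarrow> 0) (at_right 0)}"
proof -
  note T = assms(1) and U = assms(2)
  have R: "Phi I U ` {qclass I U g | g. lbounded I g \<and>
       ((\<lambda>t. qnorm I U (\<lambda>i. T t (g i) - g i)) \<longlongrightarrow> 0) (at_right 0)}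
     = {hatclass I U g | g. lbounded I g \<and> Cond I U T g}"
  proof (rule equalityI; rule subsetI)
    fix x assume "x \<in> Phi I U ` {qclass I U g | g. lbounded I g \<and>
       ((\<lambda>t. qnorm I U (\<lambda>i. T t (g i) - g i)) \<longlongrightarrow> 0) (at_right 0)}"
    then show "x \<in> {hatclass I U g | g. lbounded I g \<and> Cond I U T g}"
      using Phi_eq[OF U] tendsto_Cond[OF T U] by auto
  next
    fix x assume "x \<in> {hatclass I U g | g. lbounded I g \<and> Cond I U T g}"
    then obtain g where g: "x = hatclass I U g" "lbounded I g" "Cond I U T g" by blast
    then have "qclass I U g \<in> {qclass I U g | g. lbounded I g \<and>
       ((\<lambda>t. qnorm I U (\<lambda>i. T t (g i) - g i)) \<longlongrightarrow> 0) (at_right 0)}"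
      using tendsto_Cond[OF T U] by blast
    moreover have "x = Phi I U (qclass I U g)" using Phi_eq[OF U g(2)] g(1) by simp
    ultimately show "x \<in> Phi I U ` {qclass I U g | g. lbounded I g \<and>
       ((\<lambda>t. qnorm I U (\<lambda>i. T t (g i) - g i)) \<longlongrightarrow> 0) (at_right 0)}" by blast
  qed
  have E: "Emax I U T = {f. ns_finite I U f \<and> Cond I U T f}"
    unfolding Emax_def Cond_def by simp
  show ?thesis unfolding R Emax_hat_def E
  proof (rule equalityI; rule subsetI)
    fix x assume "x \<in> hatclass I U ` {f. ns_finite I U f \<and> Cond I U T f}"
    then obtain f where xf: "x = hatclass I U f" and fin: "ns_finite I U f" and C: "Cond I U T f" by blast
    then obtain n :: nat where JU: "{i\<in>I. norm (f i) \<le> real n} \<in> U" unfolding ns_finite_def by blast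
    define J where "J = {i\<in>I. norm (f i) \<le> real n}"
    define g where "g = (\<lambda>i. if i \<in> J then f i else 0)"
    have JU': "J \<in> U" using JU J_def by simp
    have JI: "J \<subseteq> I" unfolding J_def by auto
    have gb: "lbounded I g" unfolding lbounded_def g_def J_def
      by (rule exI[of _ "real n"]) auto
    have "ns_infinitesimal I U (\<lambda>i. f i - g i)"
      unfolding ns_infinitesimal_def
    proof safe
      fix m :: nat assume "m > 0"
      then have "J \<subseteq> {i\<in>I. norm (f i - g i) < 1 / real m}" using JI by (auto simp: g_def)
      then show "{i\<in>I. norm (f i - g i) < 1 / real m} \<in> U" using uf_up[OF U JU'] by blast
    qed
    then have hq: "hatclass I U f = hatclass I U g" by (rule hat_eq[OF U])
    have "Cond I U T g" unfolding Cond_def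
    proof safe
      fix e :: real assume "e > 0"
      then obtain d where d: "d > 0" "\<forall>t. 0 < t \<and> t < d \<longrightarrow> {i\<in>I. norm (T t (f i) - f i) < e} \<in> U"
        using C unfolding Cond_def by blast
      show "\<exists>\<delta>>0. \<forall>t. 0 < t \<and> t < \<delta> \<longrightarrow> {i\<in>I. norm (T t (g i) - g i) < e} \<in> U"
      proof (intro exI[of _ d] conjI allI impI)
        fix t assume "0 < t \<and> t < d"
        then have A: "{i\<in>I. norm (T t (f i) - f i) < e} \<in> U" using d by blast
        have "J \<inter> {i\<in>I. norm (T t (f i) - f i) < e} \<subseteq> {i\<in>I. norm (T t (g i) - g i) < e}"
          by (auto simp: g_def)
        then show "{i\<in>I. norm (T t (g i) - g i) < e} \<in> U"
          using uf_up[OF U uf_int[OF U JU' A]] by blast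
      qed (use d in simp)
    qed
    then show "x \<in> {hatclass I U g | g. lbounded I g \<and> Cond I U T g}"
      using hq gb xf by blast
  next
    fix x assume "x \<in> {hatclass I U g | g. lbounded I g \<and> Cond I U T g}"
    then obtain g where xg: "x = hatclass I U g" and gb: "lbounded I g" and C: "Cond I U T g" by blast
    obtain B where B: "\<forall>i\<in>I. norm (g i) \<le> B" using gb unfolding lbounded_def by blast
    have "\<forall>i\<in>I. norm (g i) \<le> real (nat \<lceil>B\<rceil>)" using B real_nat_ceiling_ge order_trans by blast
    then have "{i\<in>I. norm (g i) \<le> real (nat \<lceil>B\<rceil>)} = I" by auto
    then have "ns_finite I U g" unfolding ns_finite_def using uf_I[OF U] by metis
    then show "x \<in> hatclass I U ` {f. ns_finite I U f \<and> Cond I U T f}"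
      using C xg by blast
  qed
qed

end
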